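(* Fix $\nu$. Assume (R) and the growth-of-sum-moment condition (M), and that $T\ge p$ and $p=o(T)$ if $0\le\eta\le1/2$, respectively $p^{2\eta}=o(T)$ if $\eta>1/2$. Then \[ \widehat{MSPE}_T=\frac1T\sum_{t=1}^T|\mathbf x_t^\top\widehat{\boldsymbol\beta}_{T\nu}-\mathbf x_t^\top\boldsymbol\beta_\nu|^2=O_{\mathbb P}\Big(\frac pT\Big). \]
   Context: Setting: $p=p_T$ may grow with $T$; limits as $T,p\to\infty$. Regressors $\mathbf x_t\in\mathbb R^p$, responses with $Y_t^{(\nu)}=\mathbf x_t^\top\boldsymbol\beta_\nu+\epsilon_t^{(\nu)}$, $t=1,\dots,T$. $\mathbb P,\mathbb E$ conditional on the regressors. $\mathbb X_T=(\mathbf x_1,\dots,\mathbf x_T)^\top$ full rank, $\mathbf Y_T^{(\nu)}=(Y_1^{(\nu)},\dots,Y_T^{(\nu)})^\top$, $\widehat{\boldsymbol\beta}_{T\nu}=(\mathbb X_T^\top\mathbb X_T)^{-1}\mathbb X_T^\top\mathbf Y_T^{(\nu)}$. (R): regressors bounded; there exist positive definite $\Sigma_{\mathbf x}$, $\eta\ge0$, $C<\infty$ and a compact interval $A\subset(0,\infty)$, independent of $T,p$, with $\|T^{-1}\sum_t\mathbf x_t\mathbf x_t^\top-\Sigma_{\mathbf x}\|_2\le Cp^\eta/\sqrt T$ and $\operatorname{spec}(T^{-1}\mathbb X_T^\top\mathbb X_T)\subset A$. (M): there are $C_\nu<\infty$, $\gamma'\ge2$ with $\sup_{j\ge1}\mathbb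 E|\sum_{t=1}^Nx_{tj}\epsilon_t^{(\nu)}|^\gamma\le C_\nu N^{\gamma/2}$ for all $2\le\gamma\le\gamma'$, $N\in\mathbb N$. *)

theory Defs
  imports "HOL-Probability.Probability" "Jordan_Normal_Form.DL_Rank" "Jordan_Normal_Form.Gauss_Jordan_Elimination"
    "Jordan_Normal_Form.Char_Poly"
begin

definition vnorm2 :: "real vec \<Rightarrow> real" where
  "vnorm2 v = sqrt (v \<bullet> v)"

definition mat_norm2 :: "real mat \<Rightarrow> real" where
  "mat_norm2 A = Sup {vnorm2 (A *\<^sub>v v) | v. v \<in> carrier_vec (dim_col A) \<and> vnorm2 v = 1}"

definition pos_def_mat :: "real mat \<Rightarrow> bool" where
  "pos_def_mat A \<longleftrightarrow> A \<in> carrier_mat (dim_row A) (dim_row A) \<and> A\<^sup>T = A \<and>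
     (\<forall>v \<in> carrier_vec (dim_row A). v \<noteq> 0\<^sub>v (dim_row A) \<longrightarrow> v \<bullet> (A *\<^sub>v v) > 0)"

definition xvec :: "(nat \<Rightarrow> nat \<Rightarrow> real) \<Rightarrow> nat \<Rightarrow> nat \<Rightarrow> real vec" where
  "xvec x p t = vec p (\<lambda>j. x t (j + 1))"

definition design :: "(nat \<Rightarrow> nat \<Rightarrow> real) \<Rightarrow> nat \<Rightarrow> nat \<Rightarrow> real mat" where
  "design x T p = mat T p (\<lambda>(i, j). x (i + 1) (j + 1))"

definition resp :: "(nat \<Rightarrow> nat \<Rightarrow> real) \<Rightarrow> nat \<Rightarrow> nat \<Rightarrow> real vec \<Rightarrow> (nat \<Rightarrow> real) \<Rightarrow> real vec" where
  "resp x T p beta e = vec T (\<lambda>i. xvec x p (i + 1) \<bullet> beta + e (i + 1))"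

definition ols :: "real mat \<Rightarrow> real vec \<Rightarrow> real vec" where
  "ols X Y = the (mat_inverse (X\<^sup>T * X)) *\<^sub>v (X\<^sup>T *\<^sub>v Y)"

definition bigO_P :: "'a measure \<Rightarrow> (nat \<Rightarrow> 'a \<Rightarrow> real) \<Rightarrow> (nat \<Rightarrow> real) \<Rightarrow> bool" where
  "bigO_P M Z a \<longleftrightarrow> (\<forall>\<delta>>0. \<exists>K. \<exists>T0. \<forall>T\<ge>T0.
       measure M {\<omega> \<in> space M. \<bar>Z T \<omega>\<bar> > K * a T} < \<delta>)"

end

theory Submission
  imports Defs
begin

lemma vec_CS:
  fixes x y :: "real vec"
  assumes "x \<in> carrier_vec n" "y \<in> carrier_vec n"
  shows "(x \<bullet> y)^2 \<le> (x \<bullet> x) * (y \<bullet> y)"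
  using assms Cauchy_Schwarz_ineq_sum[of "\<lambda>i. x $ i" "\<lambda>i. y $ i" "{0..<n}"]
  by (simp add: scalar_prod_def power2_eq_square)

lemma quad_disc:
  fixes A B C :: real
  assumes "\<And>t. 0 \<le> A + 2 * t * B + t^2 * C" "C \<ge> 0"
  shows "B^2 \<le> A * C"
proof (cases "C = 0")
  case True
  show ?thesis
  proof (rule ccontr)
    assume "\<not> ?thesis"
    then have "B \<noteq> 0" using True by auto
    from assms(1)[of "-(A+1)/(2*B)"] True \<open>B \<noteq> 0\<close> show False by (simp add: field_simps)
  qed
next
  case False
  then have C: "C > 0" using assms(2) by auto
  from assms(1)[of "-B/C"] have "0 \<le> A - B^2 / C" using C by (simp add: field_simps power2_eq_square)
  then show ?thesis using C by (simp add: field_simps)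
qed

definition frob :: "real mat \<Rightarrow> real" where
  "frob A = (\<Sum>i<dim_row A. row A i \<bullet> row A i)"

lemma frob_nonneg: "frob A \<ge> 0"
  unfolding frob_def scalar_prod_def by (intro sum_nonneg) (auto)

lemma mat_vec_bound:
  fixes A :: "real mat"
  assumes A: "A \<in> carrier_mat n m" and v: "v \<in> carrier_vec m"
  shows "(A *\<^sub>v v) \<bullet> (A *\<^sub>v v) \<le> frob A * (v \<bullet> v)"
proof -
  have "(A *\<^sub>v v) \<bullet> (A *\<^sub>v v) = (\<Sum>i<n. (row A i \<bullet> v)^2)"
    using A v by (simp add: scalar_prod_def[of "A *\<^sub>v v"] power2_eq_square atLeast0LessThan)
  also have "\<dots> \<le> (\<Sum>i<n. (row A i \<bullet> row A i) * (v \<bullet> v))"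
    by (intro sum_mono vec_CS[of _ m]) (use A v in auto)
  also have "\<dots> = frob A * (v \<bullet> v)"
    using A by (simp add: frob_def sum_distrib_right)
  finally show ?thesis .
qed

lemma vec_sq_zero:
  fixes v :: "real vec"
  assumes v: "v \<in> carrier_vec n" and z: "v \<bullet> v = 0"
  shows "v = 0\<^sub>v n"
proof -
  have "(\<Sum>i\<in>{0..<n}. v $ i * v $ i) = 0" using z v by (simp add: scalar_prod_def)
  then have "\<forall>i\<in>{0..<n}. v $ i * v $ i = 0"
    by (subst sum_nonneg_eq_0_iff[symmetric]) auto
  then show ?thesis using v by (intro eq_vecI) auto
qed

lemma vec_sq_nonneg:
  fixes v :: "real vec"
  shows "v \<bullet> v \<ge> 0"
  unfolding scalar_prod_def by (intro sum_nonneg) auto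

lemma psd_CS:
  fixes M :: "real mat"
  assumes M: "M \<in> carrier_mat n n"
    and sym: "\<And>x y. x \<in> carrier_vec n \<Longrightarrow> y \<in> carrier_vec n \<Longrightarrow> x \<bullet> (M *\<^sub>v y) = y \<bullet> (M *\<^sub>v x)"
    and psd: "\<And>v. v \<in> carrier_vec n \<Longrightarrow> 0 \<le> v \<bullet> (M *\<^sub>v v)"
    and x: "x \<in> carrier_vec n" and y: "y \<in> carrier_vec n"
  shows "(x \<bullet> (M *\<^sub>v y))^2 \<le> (x \<bullet> (M *\<^sub>v x)) * (y \<bullet> (M *\<^sub>v y))"
proof (rule quad_disc)
  fix t :: real
  have ty: "t \<cdot>\<^sub>v y \<in> carrier_vec n" using y by simp
  have "(x + t \<cdot>\<^sub>v y) \<bullet> (M *\<^sub>v (x + t \<cdot>\<^sub>v y)) =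
     x \<bullet> (M *\<^sub>v x) + t * (x \<bullet> (M *\<^sub>v y)) + t * (y \<bullet> (M *\<^sub>v x)) + t * t * (y \<bullet> (M *\<^sub>v y))"
    using M x y ty
    by (simp add: mult_add_distrib_mat_vec[of M n n] mult_mat_vec[of M n n]
        add_scalar_prod_distrib[of _ n] scalar_prod_add_distrib[of _ n] algebra_simps)
  also have "\<dots> = x \<bullet> (M *\<^sub>v x) + 2 * t * (x \<bullet> (M *\<^sub>v y)) + t^2 * (y \<bullet> (M *\<^sub>v y))"
    using sym[OF y x] by (simp add: power2_eq_square)
  finally show "0 \<le> x \<bullet> (M *\<^sub>v x) + 2 * t * (x \<bullet> (M *\<^sub>v y)) + t^2 * (y \<bullet> (M *\<^sub>v y))"
    using psd[of "x + t \<cdot>\<^sub>v y"] x ty by simp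
qed (use psd y in auto)

lemma smult_one_mat_vec:
  fixes v :: "real vec"
  assumes "v \<in> carrier_vec n"
  shows "(c \<cdot>\<^sub>m 1\<^sub>m n) *\<^sub>v v = c \<cdot>\<^sub>v v"
  using assms by auto

lemma inf_eig:
  fixes G :: "real mat"
  assumes G: "G \<in> carrier_mat n n" and n: "n > 0"
    and sym: "\<And>x y. x \<in> carrier_vec n \<Longrightarrow> y \<in> carrier_vec n \<Longrightarrow> x \<bullet> (G *\<^sub>v y) = y \<bullet> (G *\<^sub>v x)"
  shows "\<exists>c. (\<forall>v\<in>carrier_vec n. c * (v \<bullet> v) \<le> v \<bullet> (G *\<^sub>v v)) \<and>
             (\<exists>v. v \<in> carrier_vec n \<and> v \<noteq> 0\<^sub>v n \<and> G *\<^sub>v v = c \<cdot>\<^sub>v v)"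
proof -
  define S where "S = {v \<bullet> (G *\<^sub>v v) | v. v \<in> carrier_vec n \<and> v \<bullet> v = 1}"
  define c where "c = Inf S"
  have "(unit_vec n 0 :: real vec) \<bullet> (G *\<^sub>v unit_vec n 0) \<in> S"
    unfolding S_def using n by (intro CollectI exI[of _ "unit_vec n 0"]) simp
  then have ne: "S \<noteq> {}" by blast
  have bdd: "bdd_below S"
  proof (rule bdd_belowI)
    fix s assume "s \<in> S"
    then obtain v :: "real vec" where v: "v \<in> carrier_vec n" "v \<bullet> v = 1" and s: "s = v \<bullet> (G *\<^sub>v v)"
      unfolding S_def by auto
    have "s^2 \<le> (v \<bullet> v) * ((G *\<^sub>v v) \<bullet> (G *\<^sub>v v))"
      unfolding s by (rule vec_CS[of _ n]) (use v G in auto)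
    also have "\<dots> \<le> frob G" using mat_vec_bound[OF G v(1)] v by simp
    finally have "s^2 \<le> frob G" .
    then show "-(1 + frob G) \<le> s"
    proof -
      assume s2: "s^2 \<le> frob G"
      show ?thesis
      proof (rule ccontr)
        assume "\<not> ?thesis"
        then have lt: "1 + frob G < -s" by simp
        have "(1 + frob G) * (1 + frob G) < (-s) * (-s)"
          by (rule mult_strict_mono[OF lt lt]) (use frob_nonneg[of G] lt in auto)
        moreover have "frob G * frob G \<ge> 0" by simp
        moreover have "(1 + frob G) * (1 + frob G) = 1 + 2 * frob G + frob G * frob G"
          by (simp add: algebra_simps)
        moreover have "s * s \<le> frob G" using s2 by (simp add: power2_eq_square)
        ultimately show False using frob_nonneg[of G] by linarith
      qed
    qed
  qed
  have low: "c * (v \<bullet> v) \<le> v \<bullet> (G *\<^sub>v v)" if v: "v \<in> carrier_vec n" for v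
  proof (cases "v \<bullet> v = 0")
    case True
    then have "v = 0\<^sub>v n" using vec_sq_zero v by blast
    then show ?thesis using True G by simp
  next
    case False
    then have pos: "v \<bullet> v > 0" using vec_sq_nonneg[of v] by linarith
    define r where "r = sqrt (v \<bullet> v)"
    have r: "r > 0" "r * r = v \<bullet> v" using pos unfolding r_def by auto
    define w where "w = (1 / r) \<cdot>\<^sub>v v"
    have w: "w \<in> carrier_vec n" using v unfolding w_def by simp
    have ww: "w \<bullet> w = 1" unfolding w_def using v r pos by (simp flip: r(2))
    have wGw: "w \<bullet> (G *\<^sub>v w) = (v \<bullet> (G *\<^sub>v v)) / (v \<bullet> v)"
      unfolding w_def using v G r by (simp add: mult_mat_vec[of G n n])
    have "c \<le> w \<bullet> (G *\<^sub>v w)" unfolding c_def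
    proof (rule cInf_lower[OF _ bdd])
      show "w \<bullet> (G *\<^sub>v w) \<in> S"
        unfolding S_def using w ww by (intro CollectI exI[of _ w]) simp
    qed
    then show ?thesis using wGw pos by (simp add: field_simps)
  qed
  define M where "M = G - c \<cdot>\<^sub>m 1\<^sub>m n"
  have M: "M \<in> carrier_mat n n" using G unfolding M_def by (intro minus_carrier_mat) auto
  have Mv: "M *\<^sub>v v = G *\<^sub>v v - c \<cdot>\<^sub>v v" if "v \<in> carrier_vec n" for v
    unfolding M_def using that G
    by (simp add: minus_mult_distrib_mat_vec[of _ n n] smult_one_mat_vec)
  have vMv: "v \<bullet> (M *\<^sub>v v) = v \<bullet> (G *\<^sub>v v) - c * (v \<bullet> v)" if "v \<in> carrier_vec n" for v
    using that G by (simp add: Mv scalar_prod_minus_distrib[of _ n])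
  have Msym: "x \<bullet> (M *\<^sub>v y) = y \<bullet> (M *\<^sub>v x)" if "x \<in> carrier_vec n" "y \<in> carrier_vec n" for x y
    using that G sym[OF that] by (simp add: Mv scalar_prod_minus_distrib[of _ n] comm_scalar_prod[of x n y])
  have Mpsd: "0 \<le> v \<bullet> (M *\<^sub>v v)" if "v \<in> carrier_vec n" for v
    using vMv[OF that] low[OF that] by simp
  have "\<exists>v. v \<in> carrier_vec n \<and> v \<noteq> 0\<^sub>v n \<and> M *\<^sub>v v = 0\<^sub>v n"
  proof (rule ccontr)
    assume nz: "\<not> ?thesis"
    have "det M \<noteq> 0" using nz det_0_iff_vec_prod_zero_field[OF M] by blast
    from det_non_zero_imp_unit[OF M this, of "()"]
    obtain N where N: "N \<in> carrier_mat n n" "N * M = 1\<^sub>m n"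
      unfolding Units_def ring_mat_def by auto
    define K where "K = sqrt (frob M)"
    have K: "K \<ge> 0" unfolding K_def using frob_nonneg by simp
    have key: "1 \<le> frob N * K * (v \<bullet> (M *\<^sub>v v))" if v: "v \<in> carrier_vec n" "v \<bullet> v = 1" for v :: "real vec"
    proof -
      define w where "w = M *\<^sub>v v"
      have w: "w \<in> carrier_vec n" unfolding w_def using M v by simp
      have "v = N *\<^sub>v w" unfolding w_def using N M v
        by (simp flip: assoc_mult_mat_vec[of N n n M n v])
      then have 1: "1 \<le> frob N * (w \<bullet> w)" using mat_vec_bound[OF N(1) w] v by simp
      have "(w \<bullet> (M *\<^sub>v w))^2 \<le> (w \<bullet> w) * ((M *\<^sub>v w) \<bullet> (M *\<^sub>v w))"
        by (rule vec_CS[of _ n]) (use w M in auto)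
      also have "\<dots> \<le> (w \<bullet> w) * (frob M * (w \<bullet> w))"
        by (rule mult_left_mono[OF mat_vec_bound[OF M w] vec_sq_nonneg])
      also have "\<dots> = (K * (w \<bullet> w))^2" unfolding K_def using frob_nonneg[of M]
        by (simp add: power2_eq_square)
      finally have A: "w \<bullet> (M *\<^sub>v w) \<le> K * (w \<bullet> w)"
        by (rule power2_le_imp_le) (use K vec_sq_nonneg[of w] in simp)
      have B: "(w \<bullet> w)^2 \<le> (v \<bullet> (M *\<^sub>v v)) * (w \<bullet> (M *\<^sub>v w))"
      proof -
        have "v \<bullet> (M *\<^sub>v w) = w \<bullet> w" using Msym[OF v(1) w] unfolding w_def by simp
        then show ?thesis using psd_CS[OF M Msym Mpsd v(1) w] by simp
      qed
      have "(v \<bullet> (M *\<^sub>v v)) * (w \<bullet> (M *\<^sub>v w)) \<le> (v \<bullet> (M *\<^sub>v v)) * (K * (w \<bullet> w))"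
        by (rule mult_left_mono[OF A Mpsd[OF v(1)]])
      with B have "(w \<bullet> w)^2 \<le> (v \<bullet> (M *\<^sub>v v)) * (K * (w \<bullet> w))"
        by (rule order_trans)
      then have 2: "w \<bullet> w \<le> K * (v \<bullet> (M *\<^sub>v v))"
      proof (cases "w \<bullet> w = 0")
        case True
        then show ?thesis using K Mpsd[OF v(1)] by simp
      next
        case False
        then have qpos: "w \<bullet> w > 0" using vec_sq_nonneg[of w] by linarith
        have "(w \<bullet> w) * (w \<bullet> w) \<le> (K * (v \<bullet> (M *\<^sub>v v))) * (w \<bullet> w)"
          using \<open>(w \<bullet> w)^2 \<le> (v \<bullet> (M *\<^sub>v v)) * (K * (w \<bullet> w))\<close>
          by (simp add: power2_eq_square mult_ac)
        then show ?thesis using qpos by (rule mult_right_le_imp_le)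
      qed
      have "1 \<le> frob N * (w \<bullet> w)" by (rule 1)
      also have "\<dots> \<le> frob N * (K * (v \<bullet> (M *\<^sub>v v)))"
        by (rule mult_left_mono[OF 2 frob_nonneg])
      finally show ?thesis by (simp add: mult_ac)
    qed
    obtain u :: "real vec" where u: "u \<in> carrier_vec n" "u \<bullet> u = 1"
      using ne unfolding S_def by auto
    have pos: "frob N * K > 0"
    proof -
      have "frob N * K \<ge> 0" using frob_nonneg[of N] K by simp
      moreover have "frob N * K \<noteq> 0" using key[OF u] by auto
      ultimately show ?thesis by linarith
    qed
    define \<delta> where "\<delta> = 1 / (frob N * K)"
    have dpos: "\<delta> > 0" using pos unfolding \<delta>_def by simp
    have "c + \<delta> \<le> c" unfolding c_def
    proof (rule cInf_greatest[OF ne])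
      fix s assume "s \<in> S"
      then obtain v :: "real vec" where v: "v \<in> carrier_vec n" "v \<bullet> v = 1" and s: "s = v \<bullet> (G *\<^sub>v v)"
        unfolding S_def by auto
      have "\<delta> \<le> v \<bullet> (M *\<^sub>v v)" using key[OF v] pos unfolding \<delta>_def
        by (simp add: field_simps)
      then show "Inf S + \<delta> \<le> s" using vMv[OF v(1)] v s unfolding c_def by simp
    qed
    then show False using dpos by simp
  qed
  then obtain v where v: "v \<in> carrier_vec n" "v \<noteq> 0\<^sub>v n" "M *\<^sub>v v = 0\<^sub>v n" by blast
  have "G *\<^sub>v v = c \<cdot>\<^sub>v v"
  proof -
    have "G *\<^sub>v v - c \<cdot>\<^sub>v v = 0\<^sub>v n" using v Mv by simp
    then have "\<And>i. i < n \<Longrightarrow> (G *\<^sub>v v) $ i = (c \<cdot>\<^sub>v v) $ i"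
    proof -
      fix i assume i: "i < n" and eq: "G *\<^sub>v v - c \<cdot>\<^sub>v v = 0\<^sub>v n"
      have "(G *\<^sub>v v - c \<cdot>\<^sub>v v) $ i = 0\<^sub>v n $ i" using eq by simp
      then show "(G *\<^sub>v v) $ i = (c \<cdot>\<^sub>v v) $ i" using i v G by simp
    qed
    then show ?thesis using v G by (intro eq_vecI) auto
  qed
  then show ?thesis using low v by blast
qed


lemma sum_1T: fixes g :: "nat \<Rightarrow> 'a::comm_monoid_add" shows "(\<Sum>t\<in>{1..T}. g t) = (\<Sum>k<T. g (k + 1))"
proof -
  have "sum g {Suc 0..T} = (\<Sum>k<T. g (Suc k))" by (rule sum.atLeast1_atMost_eq)
  then show ?thesis by simp
qed

lemma L3:
  fixes G :: "real mat"
  assumes G: "G \<in> carrier_mat n n" and d: "d \<in> carrier_vec n" and c: "c \<ge> 0"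
    and low: "\<And>v. v \<in> carrier_vec n \<Longrightarrow> c * (v \<bullet> v) \<le> v \<bullet> (G *\<^sub>v v)"
  shows "c * (d \<bullet> (G *\<^sub>v d)) \<le> (G *\<^sub>v d) \<bullet> (G *\<^sub>v d)"
proof -
  define g where "g = G *\<^sub>v d"
  have g: "g \<in> carrier_vec n" unfolding g_def using G d by simp
  have "0 \<le> (g - c \<cdot>\<^sub>v d) \<bullet> (g - c \<cdot>\<^sub>v d)" by (rule vec_sq_nonneg)
  also have "\<dots> = g \<bullet> g - 2 * c * (d \<bullet> g) + c * c * (d \<bullet> d)"
    using g d by (simp add: minus_scalar_prod_distrib[of _ n] scalar_prod_minus_distrib[of _ n]
        comm_scalar_prod[of g n d] algebra_simps)
  finally have 1: "0 \<le> g \<bullet> g - 2 * c * (d \<bullet> g) + c * c * (d \<bullet> d)" .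
  have "0 \<le> c * (d \<bullet> g - c * (d \<bullet> d))"
    using low[OF d] c unfolding g_def by simp
  then have 2: "0 \<le> c * (d \<bullet> g) - c * c * (d \<bullet> d)" by (simp add: algebra_simps)
  from 1 2 show ?thesis unfolding g_def[symmetric] by linarith
qed

lemma design_carrier: "design x T n \<in> carrier_mat T n"
  unfolding design_def by simp

lemma row_design: "i < T \<Longrightarrow> row (design x T n) i = xvec x n (i + 1)"
  unfolding design_def xvec_def by (intro eq_vecI) auto

lemma xvec_carrier: "xvec x n t \<in> carrier_vec n"
  unfolding xvec_def by simp

lemma det_bound:
  fixes x :: "nat \<Rightarrow> nat \<Rightarrow> real" and n T :: nat and a :: real and beta :: "real vec"
    and e :: "nat \<Rightarrow> real"
  assumes T: "T \<ge> 1" and a: "a > 0"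
    and spec: "\<And>lam. eigenvalue ((1 / real T) \<cdot>\<^sub>m ((design x T n)\<^sup>T * design x T n)) lam \<Longrightarrow> a \<le> lam"
    and beta: "beta \<in> carrier_vec n"
  shows "(1 / real T) * (\<Sum>t\<in>{1..T}. \<bar>xvec x n t \<bullet> ols (design x T n) (resp x T n beta e)
            - xvec x n t \<bullet> beta\<bar>^2)
         \<le> (1 / (a * real T * real T)) * (\<Sum>j\<in>{1..n}. (\<Sum>t\<in>{1..T}. x t j * e t)^2)"
proof -
  define X where "X = design x T n"
  have X: "X \<in> carrier_mat T n" unfolding X_def by (rule design_carrier)
  define G where "G = X\<^sup>T * X"
  have G: "G \<in> carrier_mat n n" unfolding G_def using X by simp
  have quadG: "y \<bullet> (G *\<^sub>v z) = (X *\<^sub>v y) \<bullet> (X *\<^sub>v z)" if y: "y \<in> carrier_vec n" and z: "z \<in> carrier_vec n" for y z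
  proof -
    have "G *\<^sub>v z = X\<^sup>T *\<^sub>v (X *\<^sub>v z)" unfolding G_def using X z
      by (simp add: assoc_mult_mat_vec[of "X\<^sup>T" n T X n z])
    moreover have "(transpose_mat (X\<^sup>T) *\<^sub>v y) \<bullet> (X *\<^sub>v z) = y \<bullet> (X\<^sup>T *\<^sub>v (X *\<^sub>v z))"
      by (rule transpose_vec_mult_scalar[of "X\<^sup>T" n T]) (use X y z in auto)
    ultimately show ?thesis by simp
  qed
  have symG: "y \<bullet> (G *\<^sub>v z) = z \<bullet> (G *\<^sub>v y)" if "y \<in> carrier_vec n" "z \<in> carrier_vec n" for y z
    using quadG[OF that] quadG[OF that(2,1)] comm_scalar_prod[of "X *\<^sub>v y" T "X *\<^sub>v z"] X that by simp
  have Tpos: "real T > 0" using T by simp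
  obtain c where c: "c \<ge> a * real T" and low: "\<And>v. v \<in> carrier_vec n \<Longrightarrow> c * (v \<bullet> v) \<le> v \<bullet> (G *\<^sub>v v)"
  proof (cases "n = 0")
    case True
    have "\<And>v. v \<in> carrier_vec n \<Longrightarrow> (a * real T) * (v \<bullet> v) \<le> v \<bullet> (G *\<^sub>v v)"
      using True by (simp add: scalar_prod_def)
    then show ?thesis using that by blast
  next
    case False
    then obtain c v where low: "\<forall>v\<in>carrier_vec n. c * (v \<bullet> v) \<le> v \<bullet> (G *\<^sub>v v)"
      and v: "v \<in> carrier_vec n" "v \<noteq> 0\<^sub>v n" "G *\<^sub>v v = c \<cdot>\<^sub>v v"
      using inf_eig[OF G _ symG] by blast
    have "eigenvalue ((1 / real T) \<cdot>\<^sub>m G) (c / real T)"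
      unfolding eigenvalue_def eigenvector_def
    proof (intro exI[of _ v] conjI)
      show "v \<in> carrier_vec (dim_row ((1 / real T) \<cdot>\<^sub>m G))" using v G by simp
      show "v \<noteq> 0\<^sub>v (dim_row ((1 / real T) \<cdot>\<^sub>m G))" using v G by simp
      show "(1 / real T) \<cdot>\<^sub>m G *\<^sub>v v = (c / real T) \<cdot>\<^sub>v v"
      proof -
        have rowc: "row G i \<bullet> v = c * v $ i" if i: "i < n" for i
        proof -
          have "(G *\<^sub>v v) $ i = (c \<cdot>\<^sub>v v) $ i" using v(3) by simp
          then show ?thesis using G v(1) i by simp
        qed
        show ?thesis using v G by (intro eq_vecI) (auto simp: rowc)
      qed
    qed
    then have "a \<le> c / real T" using spec unfolding G_def X_def by blast
    then have "c \<ge> a * real T" using Tpos by (simp add: field_simps)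
    then show ?thesis using that low by blast
  qed
  have cpos: "c > 0" using c a Tpos by (smt (verit) mult_pos_pos)
  have "det G \<noteq> 0"
  proof
    assume "det G = 0"
    then obtain v where v: "v \<in> carrier_vec n" "v \<noteq> 0\<^sub>v n" "G *\<^sub>v v = 0\<^sub>v n"
      using det_0_iff_vec_prod_zero_field[OF G] by blast
    have "v \<bullet> v \<noteq> 0" using vec_sq_zero[OF v(1)] v(2) by blast
    then have "v \<bullet> v > 0" using vec_sq_nonneg[of v] by linarith
    moreover have "c * (v \<bullet> v) \<le> 0" using low[OF v(1)] v by simp
    ultimately show False using cpos by (simp add: mult_le_0_iff)
  qed
  then have unit: "G \<in> Units (ring_mat TYPE(real) n ())" by (rule det_non_zero_imp_unit[OF G])
  obtain H where inv: "mat_inverse G = Some H"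
  proof (cases "mat_inverse G")
    case None
    then have "G \<notin> Units (ring_mat TYPE(real) n ())" by (rule mat_inverse(1)[OF G])
    with unit show ?thesis by simp
  next
    case (Some H)
    then show ?thesis using that by blast
  qed
  from mat_inverse(2)[OF G inv]
  have H: "H \<in> carrier_mat n n" and GH: "G * H = 1\<^sub>m n" and HG: "H * G = 1\<^sub>m n" by auto
  define ev where "ev = vec T (\<lambda>i. e (i + 1))"
  have ev: "ev \<in> carrier_vec T" unfolding ev_def by simp
  have Y: "resp x T n beta e = X *\<^sub>v beta + ev"
    unfolding resp_def ev_def using X row_design[of _ T x n]
    by (intro eq_vecI) (auto simp: X_def)
  define u where "u = X\<^sup>T *\<^sub>v ev"
  have u: "u \<in> carrier_vec n" unfolding u_def using X ev by simp
  define d where "d = H *\<^sub>v u"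
  have d: "d \<in> carrier_vec n" unfolding d_def using H u by simp
  have Xb: "X *\<^sub>v beta \<in> carrier_vec T" using X beta by simp
  have "ols X (resp x T n beta e) = H *\<^sub>v (X\<^sup>T *\<^sub>v (X *\<^sub>v beta + ev))"
    unfolding ols_def Y G_def[symmetric] inv by simp
  also have "X\<^sup>T *\<^sub>v (X *\<^sub>v beta + ev) = G *\<^sub>v beta + u"
    unfolding u_def G_def using X beta ev
    by (simp add: mult_add_distrib_mat_vec[of "X\<^sup>T" n T] assoc_mult_mat_vec[of "X\<^sup>T" n T X n beta])
  also have "H *\<^sub>v (G *\<^sub>v beta + u) = beta + d"
    unfolding d_def using H G beta u
    by (simp add: mult_add_distrib_mat_vec[of H n n] assoc_mult_mat_vec[of H n n G n beta, symmetric] HG)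
  finally have ols: "ols X (resp x T n beta e) = beta + d" .
  have tm: "xvec x n t \<bullet> ols X (resp x T n beta e) - xvec x n t \<bullet> beta = (X *\<^sub>v d) $ (t - 1)"
    if t: "t \<in> {1..T}" for t
  proof -
    have "xvec x n t \<bullet> (beta + d) - xvec x n t \<bullet> beta = xvec x n t \<bullet> d"
      using beta d xvec_carrier[of x n t] by (simp add: scalar_prod_add_distrib[of _ n])
    moreover have "(X *\<^sub>v d) $ (t - 1) = xvec x n t \<bullet> d"
      using t X row_design[of "t - 1" T x n] unfolding X_def by auto
    ultimately show ?thesis using ols by simp
  qed
  have "(\<Sum>t\<in>{1..T}. \<bar>xvec x n t \<bullet> ols X (resp x T n beta e) - xvec x n t \<bullet> beta\<bar>^2)
        = (\<Sum>t\<in>{1..T}. ((X *\<^sub>v d) $ (t - 1))^2)"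
    by (intro sum.cong refl) (simp add: tm)
  also have "\<dots> = (\<Sum>k<T. ((X *\<^sub>v d) $ k)^2)" by (subst sum_1T) simp
  also have "\<dots> = (X *\<^sub>v d) \<bullet> (X *\<^sub>v d)"
    using X d by (simp add: scalar_prod_def power2_eq_square atLeast0LessThan)
  also have "\<dots> = d \<bullet> (G *\<^sub>v d)" using quadG[OF d d] by simp
  finally have S: "(\<Sum>t\<in>{1..T}. \<bar>xvec x n t \<bullet> ols X (resp x T n beta e) - xvec x n t \<bullet> beta\<bar>^2)
        = d \<bullet> (G *\<^sub>v d)" .
  have Gd: "G *\<^sub>v d = u" unfolding d_def using G H u
    by (simp add: assoc_mult_mat_vec[of G n n H n u, symmetric] GH)
  have "c * (d \<bullet> (G *\<^sub>v d)) \<le> u \<bullet> u"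
    using L3[OF G d _ low] cpos Gd by simp
  then have dGd: "d \<bullet> (G *\<^sub>v d) \<le> (u \<bullet> u) / (a * real T)"
  proof -
    assume h: "c * (d \<bullet> (G *\<^sub>v d)) \<le> u \<bullet> u"
    have nn: "0 \<le> d \<bullet> (G *\<^sub>v d)" using low[OF d] cpos vec_sq_nonneg[of d] by (smt (verit) mult_nonneg_nonneg)
    have "(a * real T) * (d \<bullet> (G *\<^sub>v d)) \<le> c * (d \<bullet> (G *\<^sub>v d))"
      by (rule mult_right_mono[OF c nn])
    then have "(a * real T) * (d \<bullet> (G *\<^sub>v d)) \<le> u \<bullet> u" using h by linarith
    then show ?thesis using a Tpos by (simp add: field_simps)
  qed
  have uu: "u \<bullet> u = (\<Sum>j\<in>{1..n}. (\<Sum>t\<in>{1..T}. x t j * e t)^2)"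
  proof -
    have "u \<bullet> u = (\<Sum>j<n. (u $ j)^2)" using u by (simp add: scalar_prod_def power2_eq_square atLeast0LessThan)
    also have "\<dots> = (\<Sum>j<n. (\<Sum>t\<in>{1..T}. x t (j + 1) * e t)^2)"
    proof (intro sum.cong refl)
      fix j assume j: "j \<in> {..<n}"
      have "u $ j = col X j \<bullet> ev" unfolding u_def using j X ev by simp
      also have "\<dots> = (\<Sum>k<T. x (k + 1) (j + 1) * e (k + 1))"
        using j ev unfolding X_def design_def ev_def by (simp add: scalar_prod_def atLeast0LessThan)
      also have "\<dots> = (\<Sum>t\<in>{1..T}. x t (j + 1) * e t)" by (subst sum_1T) simp
      finally show "(u $ j)^2 = (\<Sum>t\<in>{1..T}. x t (j + 1) * e t)^2" by simp
    qed
    also have "\<dots> = (\<Sum>j\<in>{1..n}. (\<Sum>t\<in>{1..T}. x t j * e t)^2)" by (subst sum_1T) simp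
    finally show ?thesis .
  qed
  have "(1 / real T) * (\<Sum>t\<in>{1..T}. \<bar>xvec x n t \<bullet> ols X (resp x T n beta e) - xvec x n t \<bullet> beta\<bar>^2)
      \<le> (1 / real T) * ((u \<bullet> u) / (a * real T))"
    unfolding S by (rule mult_left_mono[OF dGd]) (use Tpos in simp)
  also have "\<dots> = (1 / (a * real T * real T)) * (u \<bullet> u)" by simp
  finally show ?thesis unfolding uu X_def .
qed

theorem corollary2:
  fixes M :: "'a measure"
    and x :: "nat \<Rightarrow> nat \<Rightarrow> real"
    and p :: "nat \<Rightarrow> nat"
    and beta :: "nat \<Rightarrow> real vec"
    and eps :: "nat \<Rightarrow> 'a \<Rightarrow> real"
    and \<eta> :: real
  assumes prob: "prob_space M"
    and eps_meas: "\<And>t. eps t \<in> borel_measurable M"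
    and beta_dim: "\<And>T. beta T \<in> carrier_vec (p T)"
    \<comment> \<open>(R)\<close>
    and R_bdd: "\<exists>B. \<forall>t j. \<bar>x t j\<bar> \<le> B"
    and R_cov: "\<exists>\<Sigma> :: nat \<Rightarrow> nat \<Rightarrow> real. \<exists>C. \<eta> \<ge> 0 \<and>
        (\<forall>T\<ge>1. pos_def_mat (mat (p T) (p T) (\<lambda>(i, j). \<Sigma> (i + 1) (j + 1))) \<and>
           mat_norm2 ((1 / real T) \<cdot>\<^sub>m ((design x T (p T))\<^sup>T * design x T (p T))
              - mat (p T) (p T) (\<lambda>(i, j). \<Sigma> (i + 1) (j + 1)))
           \<le> C * real (p T) powr \<eta> / sqrt (real T))"
    and R_spec: "\<exists>a b. 0 < a \<and> a \<le> b \<and> (\<forall>T\<ge>1. \<forall>lam.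
        eigenvalue ((1 / real T) \<cdot>\<^sub>m ((design x T (p T))\<^sup>T * design x T (p T))) lam \<longrightarrow> lam \<in> {a..b})"
    and full_rank: "\<And>T. T \<ge> 1 \<Longrightarrow> vec_space.rank T (design x T (p T)) = p T"
    \<comment> \<open>(M)\<close>
    and M_mom: "\<exists>C \<gamma>'. \<gamma>' \<ge> 2 \<and> (\<forall>\<gamma> N j. 2 \<le> \<gamma> \<and> \<gamma> \<le> \<gamma>' \<and> j \<ge> 1 \<longrightarrow>
        (\<integral>\<^sup>+ \<omega>. ennreal (\<bar>\<Sum>t\<in>{1..N}. x t j * eps t \<omega>\<bar> powr \<gamma>) \<partial>M)
          \<le> ennreal (C * real N powr (\<gamma> / 2)))"
    \<comment> \<open>dimension conditions\<close>
    and T_ge_p: "\<And>T. p T \<le> T"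
    and rate_small: "\<eta> \<le> 1/2 \<Longrightarrow> (\<lambda>T. real (p T) / real T) \<longlonglongrightarrow> 0"
    and rate_large: "\<eta> > 1/2 \<Longrightarrow> (\<lambda>T. real (p T) powr (2 * \<eta>) / real T) \<longlonglongrightarrow> 0"
  shows "bigO_P M
     (\<lambda>T \<omega>. (1 / real T) * (\<Sum>t\<in>{1..T}.
        \<bar>xvec x (p T) t \<bullet> ols (design x T (p T)) (resp x T (p T) (beta T) (\<lambda>s. eps s \<omega>))
          - xvec x (p T) t \<bullet> beta T\<bar>^2))
     (\<lambda>T. real (p T) / real T)"
proof -
  interpret prob_space M by (rule prob)
  obtain a b where a: "0 < a" and spec: "\<And>T lam. T \<ge> 1 \<Longrightarrow>
      eigenvalue ((1 / real T) \<cdot>\<^sub>m ((design x T (p T))\<^sup>T * design x T (p T))) lam \<Longrightarrow> lam \<in> {a..b}"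
    using R_spec by blast
  obtain C0 \<gamma>' where g2: "\<gamma>' \<ge> 2" and Mm: "\<And>\<gamma> N j. 2 \<le> \<gamma> \<Longrightarrow> \<gamma> \<le> \<gamma>' \<Longrightarrow> j \<ge> 1 \<Longrightarrow>
        (\<integral>\<^sup>+ \<omega>. ennreal (\<bar>\<Sum>t\<in>{1..N}. x t j * eps t \<omega>\<bar> powr \<gamma>) \<partial>M)
          \<le> ennreal (C0 * real N powr (\<gamma> / 2))"
    using M_mom by blast
  define C where "C = max C0 1"
  have C1: "C \<ge> 1" unfolding C_def by simp
  define S where "S T j \<omega> = (\<Sum>t\<in>{1..T}. x t j * eps t \<omega>)" for T j \<omega>
  have Smeas: "(\<lambda>\<omega>. (S T j \<omega>)^2) \<in> borel_measurable M" for T j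
    unfolding S_def by (intro borel_measurable_power borel_measurable_sum borel_measurable_times
        borel_measurable_const eps_meas)
  have Snn: "(\<integral>\<^sup>+ \<omega>. ennreal ((S T j \<omega>)^2) \<partial>M) \<le> ennreal (C * real T)" if j: "j \<ge> 1" for T j
  proof -
    have "(\<integral>\<^sup>+ \<omega>. ennreal ((S T j \<omega>)^2) \<partial>M) = (\<integral>\<^sup>+ \<omega>. ennreal (\<bar>\<Sum>t\<in>{1..T}. x t j * eps t \<omega>\<bar> powr 2) \<partial>M)"
      unfolding S_def by (simp add: power2_abs)
    also have "\<dots> \<le> ennreal (C0 * real T powr (2 / 2))" using Mm[of 2 j T] g2 j by simp
    also have "\<dots> \<le> ennreal (C * real T)" unfolding C_def
      by (intro ennreal_leI) (simp add: powr_one mult_right_mono)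
    finally show ?thesis .
  qed
  have Sint: "integrable M (\<lambda>\<omega>. (S T j \<omega>)^2)" if j: "j \<ge> 1" for T j
  proof (rule integrableI_bounded[OF Smeas])
    have "(\<integral>\<^sup>+ \<omega>. ennreal (norm ((S T j \<omega>)^2)) \<partial>M) = (\<integral>\<^sup>+ \<omega>. ennreal ((S T j \<omega>)^2) \<partial>M)"
      by simp
    also have "\<dots> \<le> ennreal (C * real T)" by (rule Snn[OF j])
    also have "\<dots> < \<infinity>" by simp
    finally show "(\<integral>\<^sup>+ \<omega>. ennreal (norm ((S T j \<omega>)^2)) \<partial>M) < \<infinity>" .
  qed
  have Sexp: "(\<integral>\<omega>. (S T j \<omega>)^2 \<partial>M) \<le> C * real T" if j: "j \<ge> 1" for T j
  proof -
    have "ennreal (\<integral>\<omega>. (S T j \<omega>)^2 \<partial>M) = (\<integral>\<^sup>+ \<omega>. ennreal ((S T j \<omega>)^2) \<partial>M)"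
      by (rule nn_integral_eq_integral[OF Sint[OF j], symmetric]) simp
    also have "\<dots> \<le> ennreal (C * real T)" by (rule Snn[OF j])
    finally show ?thesis using C1 by (subst (asm) ennreal_le_iff) auto
  qed
  define W where "W T \<omega> = (\<Sum>j\<in>{1..p T}. (S T j \<omega>)^2)" for T \<omega>
  have Wmeas: "W T \<in> borel_measurable M" for T
    unfolding W_def by (intro borel_measurable_sum Smeas)
  have Wint: "integrable M (W T)" for T
  proof -
    have "integrable M (\<lambda>\<omega>. \<Sum>j\<in>{1..p T}. (S T j \<omega>)^2)"
      by (rule Bochner_Integration.integrable_sum) (rule Sint, simp)
    then show ?thesis unfolding W_def by simp
  qed
  have Wexp: "(\<integral>\<omega>. W T \<omega> \<partial>M) \<le> real (p T) * (C * real T)" for T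
  proof -
    have "(\<integral>\<omega>. W T \<omega> \<partial>M) = (\<Sum>j\<in>{1..p T}. (\<integral>\<omega>. (S T j \<omega>)^2 \<partial>M))"
      unfolding W_def by (rule Bochner_Integration.integral_sum) (rule Sint, simp)
    also have "\<dots> \<le> (\<Sum>j\<in>{1..p T}. C * real T)" by (intro sum_mono Sexp) simp
    also have "\<dots> = real (p T) * (C * real T)" by simp
    finally show ?thesis .
  qed
  have Wnn: "W T \<omega> \<ge> 0" for T \<omega> unfolding W_def by (intro sum_nonneg) simp
  define Z where "Z T \<omega> = (1 / real T) * (\<Sum>t\<in>{1..T}.
        \<bar>xvec x (p T) t \<bullet> ols (design x T (p T)) (resp x T (p T) (beta T) (\<lambda>s. eps s \<omega>))
          - xvec x (p T) t \<bullet> beta T\<bar>^2)" for T \<omega>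
  have Znn: "Z T \<omega> \<ge> 0" for T \<omega> unfolding Z_def by (intro mult_nonneg_nonneg sum_nonneg) auto
  have Zle: "Z T \<omega> \<le> (1 / (a * real T * real T)) * W T \<omega>" if T: "T \<ge> 1" for T \<omega>
    unfolding Z_def W_def S_def
    by (rule det_bound[OF T a _ beta_dim]) (use spec[OF T] in auto)
  show ?thesis
    unfolding bigO_P_def Z_def[symmetric]
  proof (intro allI impI)
    fix \<delta> :: real assume d: "\<delta> > 0"
    define K where "K = 2 * C / (a * \<delta>)"
    have Kpos: "K > 0" unfolding K_def using C1 a d by simp
    have "\<forall>T\<ge>1. measure M {\<omega> \<in> space M. \<bar>Z T \<omega>\<bar> > K * (real (p T) / real T)} < \<delta>"
    proof (intro allI impI)
      fix T :: nat assume T: "T \<ge> 1"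
      have Tpos: "real T > 0" using T by simp
      show "measure M {\<omega> \<in> space M. \<bar>Z T \<omega>\<bar> > K * (real (p T) / real T)} < \<delta>"
      proof (cases "p T = 0")
        case True
        have "W T \<omega> = 0" for \<omega> unfolding W_def using True by simp
        then have "Z T \<omega> \<le> 0" for \<omega> using Zle[OF T, of \<omega>] by simp
        then have z0: "Z T \<omega> = 0" for \<omega> using Znn[of T \<omega>] by (meson order.antisym)
        have "{\<omega> \<in> space M. \<bar>Z T \<omega>\<bar> > K * (real (p T) / real T)} = {}"
          using True by (simp add: z0)
        then show ?thesis using d by (simp only:) simp
      next
        case False
        then have ppos: "real (p T) > 0" by simp
        define c where "c = K * a * real (p T) * real T"
        have cpos: "c > 0" unfolding c_def using Kpos a ppos Tpos by simp
        have sub: "{\<omega> \<in> space M. \<bar>Z T \<omega>\<bar> > K * (real (p T) / real T)} \<subseteq> {\<omega> \<in> space M. c \<le> W T \<omega>}"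
        proof safe
          fix \<omega> assume \<omega>: "\<omega> \<in> space M" and gt: "\<bar>Z T \<omega>\<bar> > K * (real (p T) / real T)"
          have "K * (real (p T) / real T) < (1 / (a * real T * real T)) * W T \<omega>"
            using gt Zle[OF T, of \<omega>] Znn[of T \<omega>] by simp
          then show "c \<le> W T \<omega>" unfolding c_def using a Tpos
            by (simp add: field_simps)
        qed
        have "measure M {\<omega> \<in> space M. \<bar>Z T \<omega>\<bar> > K * (real (p T) / real T)}
              \<le> measure M {\<omega> \<in> space M. c \<le> W T \<omega>}"
          by (rule finite_measure_mono[OF sub]) (use Wmeas in measurable)
        also have "\<dots> \<le> (\<integral>\<omega>. W T \<omega> \<partial>M) / c"
          by (rule integral_Markov_inequality_measure[OF Wint _ _ cpos, of "space M"]) (auto simp: Wnn)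
        also have "\<dots> \<le> (real (p T) * (C * real T)) / c"
          by (rule divide_right_mono[OF Wexp]) (use cpos in simp)
        also have "\<dots> = \<delta> / 2" unfolding c_def K_def using ppos Tpos a d C1
          by (simp add: field_simps)
        also have "\<dots> < \<delta>" using d by simp
        finally show ?thesis .
      qed
    qed
    then show "\<exists>K T0. \<forall>T\<ge>T0. measure M {\<omega> \<in> space M. \<bar>Z T \<omega>\<bar> > K * (real (p T) / real T)} < \<delta>"
      by blast
  qed
qed

end
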